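(* Let $\varphi:[0,\infty)\to\mathbb{R}$ be a continuous function which is Lebesgue integrable on $(0,\infty)$, of bounded variation on $[0,\infty)$, and satisfies $\varphi(x)\to 0$ as $x\to\infty$, and let $\Phi(t)=\int_0^\infty e^{ixt}\,d\varphi(x)$. Then $\Phi(t)\to 0$ as $|t|\to\infty$ if and only if the two limits $$\lim_{t\to+\infty} t\int_0^\infty \varphi(x)\sin(xt)\,dx,\qquad \lim_{t\to+\infty} t\int_0^\infty \varphi(x)\cos(xt)\,dx$$ both exist; in that case they equal $\varphi(0)$ and $0$, respectively. *)

theory Defs
  imports "HOL-Analysis.Analysis"
begin

definition bounded_variation_on :: "(real \<Rightarrow> real) \<Rightarrow> real set \<Rightarrow> bool" where
  "bounded_variation_on f S \<longleftrightarrow>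
     (\<exists>M. \<forall>(n::nat) (x::nat \<Rightarrow> real).
        (\<forall>i\<le>n. x i \<in> S) \<and> (\<forall>i<n. x i \<le> x (Suc i)) \<longrightarrow>
        (\<Sum>i<n. \<bar>f (x (Suc i)) - f (x i)\<bar>) \<le> M)"

definition has_RS_integral ::
    "(real \<Rightarrow> complex) \<Rightarrow> (real \<Rightarrow> real) \<Rightarrow> real \<Rightarrow> real \<Rightarrow> complex \<Rightarrow> bool" where
  "has_RS_integral f g a b I \<longleftrightarrow>
     (\<forall>e>0. \<exists>d>0. \<forall>(n::nat) (x::nat \<Rightarrow> real) (t::nat \<Rightarrow> real).
        x 0 = a \<and> x n = b \<and>
        (\<forall>i<n. x i < x (Suc i) \<and> x (Suc i) - x i < d \<and> x i \<le> t i \<and> t i \<le> x (Suc i))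
        \<longrightarrow> norm ((\<Sum>i<n. f (t i) * complex_of_real (g (x (Suc i)) - g (x i))) - I) < e)"

definition RS_integral :: "(real \<Rightarrow> complex) \<Rightarrow> (real \<Rightarrow> real) \<Rightarrow> real \<Rightarrow> real \<Rightarrow> complex" where
  "RS_integral f g a b = (THE I. has_RS_integral f g a b I)"

definition RS_integral_0_inf :: "(real \<Rightarrow> complex) \<Rightarrow> (real \<Rightarrow> real) \<Rightarrow> complex" where
  "RS_integral_0_inf f g = Lim at_top (\<lambda>R. RS_integral f g 0 R)"

definition Phi :: "(real \<Rightarrow> real) \<Rightarrow> real \<Rightarrow> complex" where
  "Phi \<phi> t = RS_integral_0_inf (\<lambda>x. cis (x * t)) \<phi>"

end

theory Submission
  imports Defs "HOL-Probability.Sinc_Integral"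
begin

lemma chain_mono:
  fixes x :: "nat \<Rightarrow> real"
  assumes "\<forall>i<n. x i < x (Suc i)"
  shows "i \<le> j \<Longrightarrow> j \<le> n \<Longrightarrow> x i \<le> x j"
proof (induction j)
  case 0 then show ?case by simp
next
  case (Suc j)
  show ?case
  proof (cases "i = Suc j")
    case False
    then have "i \<le> j" using Suc by simp
    then have "x i \<le> x j" using Suc by simp
    also have "x j < x (Suc j)" using assms Suc by simp
    finally show ?thesis by simp
  qed simp
qed

lemma cis_deriv:
  "((\<lambda>x. cis (x * t)) has_vector_derivative (\<i> * complex_of_real t * cis (s * t))) (at s within S)"
proof -
  have e: "cis (x * t) = exp (x *\<^sub>R (\<i> * complex_of_real t))" for x
    by (simp add: cis_conv_exp scaleR_conv_of_real mult_ac)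
  show ?thesis unfolding e
    by (rule has_vector_derivative_at_within[OF exp_scaleR_has_vector_derivative_left])
qed

lemma RS_unique:
  assumes ab: "a < b" and I: "has_RS_integral f g a b I" and J: "has_RS_integral f g a b J"
  shows "I = J"
proof (rule ccontr)
  assume "I \<noteq> J"
  define e where "e = norm (I - J) / 2"
  have e: "e > 0" using \<open>I \<noteq> J\<close> by (simp add: e_def)
  obtain d1 where d1: "d1 > 0" and D1: "\<And>n x t. x 0 = a \<and> x n = b \<and>
        (\<forall>i<n. x i < x (Suc i) \<and> x (Suc i) - x i < d1 \<and> x i \<le> t i \<and> t i \<le> x (Suc i))
        \<Longrightarrow> norm ((\<Sum>i<n. f (t i) * complex_of_real (g (x (Suc i)) - g (x i))) - I) < e"
    using I e unfolding has_RS_integral_def by meson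
  obtain d2 where d2: "d2 > 0" and D2: "\<And>n x t. x 0 = a \<and> x n = b \<and>
        (\<forall>i<n. x i < x (Suc i) \<and> x (Suc i) - x i < d2 \<and> x i \<le> t i \<and> t i \<le> x (Suc i))
        \<Longrightarrow> norm ((\<Sum>i<n. f (t i) * complex_of_real (g (x (Suc i)) - g (x i))) - J) < e"
    using J e unfolding has_RS_integral_def by meson
  define d where "d = min d1 d2"
  have d: "d > 0" using d1 d2 by (simp add: d_def)
  obtain n :: nat where n: "(b - a) / d < n" using reals_Archimedean2 by blast
  have npos: "n > 0" using n ab d by (cases n) (auto simp: field_simps)
  define x where "x i = a + real i * ((b - a) / n)" for i
  have step: "(b - a) / n < d" using n npos d ab by (simp add: field_simps)
  have P: "x 0 = a \<and> x n = b \<and>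
        (\<forall>i<n. x i < x (Suc i) \<and> x (Suc i) - x i < d \<and> x i \<le> x i \<and> x i \<le> x (Suc i))"
  proof -
    have xs: "x (Suc i) - x i = (b - a) / n" for i by (simp add: x_def algebra_simps add_divide_distrib[symmetric] diff_divide_distrib[symmetric])
    have hp: "(b - a) / n > 0" using ab npos by simp
    have "x 0 = a" by (simp add: x_def)
    moreover have "x n = b" using npos by (simp add: x_def)
    moreover have "x i < x (Suc i)" for i using xs[of i] hp by linarith
    ultimately show ?thesis using xs step by (auto simp: less_imp_le)
  qed
  let ?S = "\<Sum>i<n. f (x i) * complex_of_real (g (x (Suc i)) - g (x i))"
  have "norm (?S - I) < e" by (rule D1) (use P in \<open>auto simp: d_def\<close>)
  moreover have "norm (?S - J) < e" by (rule D2) (use P in \<open>auto simp: d_def\<close>)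
  ultimately have "norm (I - J) < 2 * e"
    using norm_triangle_ineq[of "I - ?S" "?S - J"] norm_minus_commute[of I ?S] by simp
  then show False by (simp add: e_def)
qed

lemma RS_integral_eqI:
  "a < b \<Longrightarrow> has_RS_integral f g a b I \<Longrightarrow> RS_integral f g a b = I"
  unfolding RS_integral_def using RS_unique by blast

lemma RS_parts:
  fixes p :: "real \<Rightarrow> real" and t R :: real
  assumes cp: "continuous_on {0..R} p" and R: "0 < R"
  shows "has_RS_integral (\<lambda>x. cis (x * t)) p 0 R
     (cis (R * t) * complex_of_real (p R) - complex_of_real (p 0)
       - integral {0..R} (\<lambda>s. \<i> * complex_of_real t * cis (s * t) * complex_of_real (p s)))"
proof -
  define g where "g = (\<lambda>s. \<i> * complex_of_real t * cis (s * t) * complex_of_real (p s))"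
  define f where "f = (\<lambda>x. cis (x * t))"
  define h where "h = (\<lambda>y. f y * complex_of_real (p y) - integral {0..y} g)"
  have FTC: "((\<lambda>s. \<i> * complex_of_real t * cis (s * t)) has_integral (f b - f a)) {a..b}"
    if "a \<le> b" for a b
    unfolding f_def
    by (rule fundamental_theorem_of_calculus[OF that]) (rule cis_deriv)
  have gcont: "continuous_on {0..R} g"
    unfolding g_def by (intro continuous_intros cp)
  have gint: "g integrable_on {a..b}" if "0 \<le> a" "b \<le> R" for a b
    by (rule integrable_continuous_interval, rule continuous_on_subset[OF gcont]) (use that in auto)
  have Gdiff: "integral {0..b} g - integral {0..a} g = integral {a..b} g"
    if "0 \<le> a" "a \<le> b" "b \<le> R" for a b
    using Henstock_Kurzweil_Integration.integral_combine[OF that(1,2) gint[OF order.refl that(3)]] by (simp add: algebra_simps)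
  have fdiff: "norm (f b - f a) \<le> \<bar>t\<bar> * (b - a)" if "a \<le> b" for a b
  proof -
    have "norm (f b - f a) \<le> \<bar>t\<bar> * Henstock_Kurzweil_Integration.content {a..b}"
      by (rule has_integral_bound_real[OF _ finite.emptyI FTC[OF that]]) (auto simp: norm_mult)
    then show ?thesis using that by simp
  qed
  have key: "norm (f \<tau> * complex_of_real (p b - p a) - (h b - h a)) \<le> 2 * \<bar>t\<bar> * \<eta> * (b - a)"
    if ab: "0 \<le> a" "a \<le> \<tau>" "\<tau> \<le> b" "b \<le> R"
      and bnd: "\<forall>s\<in>{a..b}. \<bar>p s - p a\<bar> \<le> \<eta>" and eta: "0 \<le> \<eta>" for a b \<tau> \<eta>
  proof -
    have i1: "((\<lambda>s. g s - \<i> * complex_of_real t * cis (s * t) * complex_of_real (p a)) has_integral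
               (integral {a..b} g - (f b - f a) * complex_of_real (p a))) {a..b}"
      by (rule has_integral_diff[OF integrable_integral[OF gint] has_integral_mult_left[OF FTC]])
         (use ab in auto)
    have n1: "norm (integral {a..b} g - (f b - f a) * complex_of_real (p a)) \<le> (\<bar>t\<bar> * \<eta>) * Henstock_Kurzweil_Integration.content {a..b}"
    proof (rule has_integral_bound_real[OF _ finite.emptyI i1])
      show "0 \<le> \<bar>t\<bar> * \<eta>" using eta by simp
      fix s assume s: "s \<in> {a..b} - {}"
      have "g s - \<i> * complex_of_real t * cis (s * t) * complex_of_real (p a)
            = \<i> * complex_of_real t * cis (s * t) * complex_of_real (p s - p a)"
        by (simp add: g_def algebra_simps)
      also have "norm \<dots> = \<bar>t\<bar> * \<bar>p s - p a\<bar>" by (simp add: norm_mult del: of_real_diff)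
      also have "\<dots> \<le> \<bar>t\<bar> * \<eta>" using bnd s by (intro mult_left_mono) auto
      finally show "norm (g s - \<i> * complex_of_real t * cis (s * t) * complex_of_real (p a)) \<le> \<bar>t\<bar> * \<eta>" .
    qed
    have n2: "norm ((f \<tau> - f b) * complex_of_real (p b - p a)) \<le> (\<bar>t\<bar> * (b - a)) * \<eta>"
    proof -
      have "norm ((f \<tau> - f b) * complex_of_real (p b - p a)) = norm (f b - f \<tau>) * \<bar>p b - p a\<bar>"
        by (simp add: norm_mult norm_minus_commute del: of_real_diff)
      also have "\<dots> \<le> (\<bar>t\<bar> * (b - a)) * \<eta>"
      proof (rule mult_mono)
        show "norm (f b - f \<tau>) \<le> \<bar>t\<bar> * (b - a)"
          using fdiff[of \<tau> b] ab by (smt (verit, best) abs_ge_zero mult_left_mono)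
        show "\<bar>p b - p a\<bar> \<le> \<eta>" using bnd ab by auto
      qed (use ab in auto)
      finally show ?thesis .
    qed
    have Gd: "integral {0..b} g - integral {0..a} g = integral {a..b} g" using Gdiff ab by simp
    have E: "f \<tau> * complex_of_real (p b - p a) - (h b - h a)
          = (f \<tau> - f b) * complex_of_real (p b - p a) + (integral {a..b} g - (f b - f a) * complex_of_real (p a))"
      unfolding h_def using Gd[symmetric] by (simp add: algebra_simps)
    have "norm (f \<tau> * complex_of_real (p b - p a) - (h b - h a))
        \<le> (\<bar>t\<bar> * (b - a)) * \<eta> + (\<bar>t\<bar> * \<eta>) * Henstock_Kurzweil_Integration.content {a..b}"
      unfolding E by (rule order.trans[OF norm_triangle_ineq add_mono[OF n2 n1]])
    also have "\<dots> = 2 * \<bar>t\<bar> * \<eta> * (b - a)" using ab by (simp add: algebra_simps)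
    finally show ?thesis .
  qed
  show ?thesis
    unfolding has_RS_integral_def
  proof (intro allI impI)
    fix e :: real assume e: "e > 0"
    define \<eta> where "\<eta> = e / (2 * (\<bar>t\<bar> + 1) * (R + 1))"
    have eta: "\<eta> > 0" using e R by (simp add: \<eta>_def)
    have "uniformly_continuous_on {0..R} p"
      by (rule compact_uniformly_continuous[OF cp compact_Icc])
    then obtain d where d: "d > 0" and D: "\<And>x x'. x \<in> {0..R} \<Longrightarrow> x' \<in> {0..R} \<Longrightarrow> dist x' x < d \<Longrightarrow> dist (p x') (p x) < \<eta>"
      unfolding uniformly_continuous_on_def using eta by metis
    show "\<exists>d>0. \<forall>n x ta. x 0 = 0 \<and> x n = R \<and>
         (\<forall>i<n. x i < x (Suc i) \<and> x (Suc i) - x i < d \<and> x i \<le> ta i \<and> ta i \<le> x (Suc i)) \<longrightarrow>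
         norm ((\<Sum>i<n. cis (ta i * t) * complex_of_real (p (x (Suc i)) - p (x i))) -
            (cis (R * t) * complex_of_real (p R) - complex_of_real (p 0) -
             integral {0..R} (\<lambda>s. \<i> * complex_of_real t * cis (s * t) * complex_of_real (p s)))) < e"
    proof (intro exI[of _ d] conjI allI impI d)
      fix n x \<tau> assume H: "x 0 = 0 \<and> x n = R \<and>
         (\<forall>i<n. x i < x (Suc i) \<and> x (Suc i) - x i < d \<and> x i \<le> \<tau> i \<and> \<tau> i \<le> x (Suc i))"
      have inc: "\<forall>i<n. x i < x (Suc i)" using H by auto
      have inR: "0 \<le> x i \<and> x i \<le> R" if "i \<le> n" for i
        using chain_mono[OF inc, of 0 i] chain_mono[OF inc, of i n] that H by auto
      have h0: "h 0 = complex_of_real (p 0)" by (simp add: h_def f_def)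
      have hR: "h R = cis (R * t) * complex_of_real (p R) - integral {0..R} g" by (simp add: h_def f_def)
      have Ieq: "cis (R * t) * complex_of_real (p R) - complex_of_real (p 0) - integral {0..R} g
                 = (\<Sum>i<n. h (x (Suc i)) - h (x i))"
        using sum_lessThan_telescope[of "\<lambda>i. h (x i)" n] H h0 hR by simp
      have bi: "norm (cis (\<tau> i * t) * complex_of_real (p (x (Suc i)) - p (x i)) - (h (x (Suc i)) - h (x i)))
               \<le> 2 * \<bar>t\<bar> * \<eta> * (x (Suc i) - x i)" if i: "i < n" for i
      proof -
        have a: "0 \<le> x i" "x (Suc i) \<le> R" using inR[of i] inR[of "Suc i"] i by auto
        have b: "\<forall>s\<in>{x i..x (Suc i)}. \<bar>p s - p (x i)\<bar> \<le> \<eta>"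
        proof
          fix s assume s: "s \<in> {x i..x (Suc i)}"
          have "dist (p s) (p (x i)) < \<eta>"
            by (rule D) (use s a H i in \<open>auto simp: dist_real_def\<close>)
          then show "\<bar>p s - p (x i)\<bar> \<le> \<eta>" by (simp add: dist_real_def)
        qed
        have "\<tau> i \<in> {x i..x (Suc i)}" using H i by auto
        then show ?thesis
          using key[of "x i" "\<tau> i" "x (Suc i)" \<eta>] a b eta unfolding f_def by auto
      qed
      have "norm ((\<Sum>i<n. cis (\<tau> i * t) * complex_of_real (p (x (Suc i)) - p (x i))) -
            (cis (R * t) * complex_of_real (p R) - complex_of_real (p 0) - integral {0..R} g))
          = norm (\<Sum>i<n. cis (\<tau> i * t) * complex_of_real (p (x (Suc i)) - p (x i)) - (h (x (Suc i)) - h (x i)))"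
        unfolding Ieq by (simp add: sum_subtractf)
      also have "\<dots> \<le> (\<Sum>i<n. norm (cis (\<tau> i * t) * complex_of_real (p (x (Suc i)) - p (x i)) - (h (x (Suc i)) - h (x i))))"
        by (rule norm_sum)
      also have "\<dots> \<le> (\<Sum>i<n. 2 * \<bar>t\<bar> * \<eta> * (x (Suc i) - x i))"
        by (rule sum_mono) (use bi in auto)
      also have "\<dots> = 2 * \<bar>t\<bar> * \<eta> * R"
        using H by (simp add: sum_distrib_left[symmetric] sum_lessThan_telescope)
      also have "\<dots> < e"
      proof -
        have "\<bar>t\<bar> * R < (\<bar>t\<bar> + 1) * (R + 1)" using R by (simp add: algebra_simps)
        then have "e * (\<bar>t\<bar> * R) < e * ((\<bar>t\<bar> + 1) * (R + 1))" using e by simp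
        moreover have pos: "(\<bar>t\<bar> + 1) * (R + 1) > 0" using R by (simp add: add_pos_nonneg)
        moreover have "2 * \<bar>t\<bar> * \<eta> * R = e * (\<bar>t\<bar> * R) / ((\<bar>t\<bar> + 1) * (R + 1))"
          unfolding \<eta>_def using pos by (simp add: divide_simps)
        ultimately show ?thesis by (simp add: divide_less_eq)
      qed
      finally show "norm ((\<Sum>i<n. cis (\<tau> i * t) * complex_of_real (p (x (Suc i)) - p (x i))) -
            (cis (R * t) * complex_of_real (p R) - complex_of_real (p 0) -
             integral {0..R} (\<lambda>s. \<i> * complex_of_real t * cis (s * t) * complex_of_real (p s)))) < e"
        unfolding g_def .
    qed
  qed
qed

lemma Ici_Ioi:
  fixes f :: "real \<Rightarrow> 'a::{banach, second_countable_topology}"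
  assumes [measurable]: "f \<in> borel_measurable borel"
  shows "set_integrable lborel {0..} f \<longleftrightarrow> set_integrable lborel {0<..} f"
    and "(LBINT x:{0..}. f x) = (LBINT x:{0<..}. f x)"
proof -
  have ae: "AE x in lborel. indicator {0..} x *\<^sub>R f x = indicator {0<..} x *\<^sub>R f x"
    using AE_lborel_singleton[of 0] by eventually_elim (auto split: split_indicator)
  show "set_integrable lborel {0..} f \<longleftrightarrow> set_integrable lborel {0<..} f"
    unfolding set_integrable_def by (rule integrable_cong_AE[OF _ _ ae]) auto
  show "(LBINT x:{0..}. f x) = (LBINT x:{0<..}. f x)"
    unfolding set_lebesgue_integral_def by (rule integral_cong_AE[OF _ _ ae]) auto
qed

lemma Phi_formula:
  fixes q :: "real \<Rightarrow> real"
  assumes cq: "continuous_on UNIV q" and int: "set_integrable lborel {0<..} q"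
    and lim: "(q \<longlongrightarrow> 0) at_top"
  shows "Phi q t = - complex_of_real (q 0) - \<i> * complex_of_real t * (LBINT s:{0<..}. cis (s * t) * complex_of_real (q s))"
proof -
  have qm[measurable]: "q \<in> borel_measurable borel" using cq by (rule borel_measurable_continuous_onI)
  define g where "g = (\<lambda>s. \<i> * complex_of_real t * cis (s * t) * complex_of_real (q s))"
  have gc: "continuous_on UNIV g" unfolding g_def by (intro continuous_intros cq)
  have gm[measurable]: "g \<in> borel_measurable borel" using gc by (rule borel_measurable_continuous_onI)
  have int0: "set_integrable lborel {0..} q" using Ici_Ioi(1)[OF qm] int by simp
  have gint: "set_integrable lborel {0..} g"
  proof (rule set_integrable_bound[where f = "\<lambda>x. \<bar>t\<bar> * q x"])
    show "set_integrable lborel {0..} (\<lambda>x. \<bar>t\<bar> * q x)" using int0 by simp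
    show "set_borel_measurable lborel {0..} g" unfolding set_borel_measurable_def by measurable
    show "AE x in lborel. x \<in> {0..} \<longrightarrow> norm (g x) \<le> norm (\<bar>t\<bar> * q x)"
      by (auto simp: g_def norm_mult abs_mult)
  qed
  have lim1: "((\<lambda>R. LBINT s:{0..R}. g s) \<longlongrightarrow> (LBINT s:{0..}. g s)) at_top"
    by (rule tendsto_set_lebesgue_integral_at_top[OF _ gint]) auto
  have lim2: "((\<lambda>R. cis (R * t) * complex_of_real (q R)) \<longlongrightarrow> 0) at_top"
  proof -
    have "((\<lambda>R. norm (cis (R * t) * complex_of_real (q R))) \<longlongrightarrow> 0) at_top"
      using tendsto_rabs[OF lim] by (simp add: norm_mult)
    then show ?thesis by (simp add: tendsto_norm_zero_iff)
  qed
  have ev: "\<forall>\<^sub>F R in at_top. RS_integral (\<lambda>x. cis (x * t)) q 0 R =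
            cis (R * t) * complex_of_real (q R) - complex_of_real (q 0) - (LBINT s:{0..R}. g s)"
    using eventually_gt_at_top[of 0]
  proof eventually_elim
    case (elim R)
    have "RS_integral (\<lambda>x. cis (x * t)) q 0 R = cis (R * t) * complex_of_real (q R) - complex_of_real (q 0) - integral {0..R} g"
      unfolding g_def
      by (rule RS_integral_eqI[OF elim RS_parts[OF continuous_on_subset[OF cq] elim]]) auto
    also have "integral {0..R} g = (LBINT s:{0..R}. g s)"
      by (rule set_borel_integral_eq_integral(2)[symmetric], rule borel_integrable_atLeastAtMost'[OF continuous_on_subset[OF gc]]) auto
    finally show ?case .
  qed
  have "((\<lambda>R. RS_integral (\<lambda>x. cis (x * t)) q 0 R) \<longlongrightarrow> 0 - complex_of_real (q 0) - (LBINT s:{0..}. g s)) at_top"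
    by (rule Lim_transform_eventually[OF tendsto_diff[OF tendsto_diff[OF lim2 tendsto_const] lim1]])
       (use ev in \<open>simp add: eventually_mono eq_commute\<close>)
  then have "Phi q t = - complex_of_real (q 0) - (LBINT s:{0..}. g s)"
    unfolding Phi_def RS_integral_0_inf_def by (simp add: tendsto_Lim)
  also have "(LBINT s:{0..}. g s) = (LBINT s:{0<..}. g s)" by (rule Ici_Ioi(2)[OF gm])
  also have "\<dots> = \<i> * complex_of_real t * (LBINT s:{0<..}. cis (s * t) * complex_of_real (q s))"
    unfolding g_def by (simp add: mult.assoc)
  finally show ?thesis .
qed

lemma improper_FTC:
  fixes f F :: "real \<Rightarrow> 'a::euclidean_space"
  assumes int: "set_integrable lborel {a..} f"
    and der: "\<And>x. x \<ge> a \<Longrightarrow> (F has_vector_derivative f x) (at x)"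
    and lim: "(F \<longlongrightarrow> B) at_top"
  shows "(LBINT x:{a..}. f x) = B - F a"
proof -
  have ev: "\<forall>\<^sub>F b in at_top. (LBINT x:{a..b}. f x) = F b - F a"
    using eventually_ge_at_top[of a]
  proof eventually_elim
    case (elim b)
    have si: "set_integrable lborel {a..b} f"
      by (rule set_integrable_subset[OF int]) auto
    have "(f has_integral (F b - F a)) {a..b}"
      by (rule fundamental_theorem_of_calculus[OF elim])
         (auto intro!: has_vector_derivative_at_within der)
    then have "integral {a..b} f = F b - F a" by (rule integral_unique)
    then show ?case using set_borel_integral_eq_integral(2)[OF si] by simp
  qed
  have l1: "((\<lambda>b. LBINT x:{a..b}. f x) \<longlongrightarrow> (LBINT x:{a..}. f x)) at_top"
    by (rule tendsto_set_lebesgue_integral_at_top[OF _ int]) auto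
  have l2: "((\<lambda>b. LBINT x:{a..b}. f x) \<longlongrightarrow> B - F a) at_top"
    by (rule Lim_transform_eventually[OF tendsto_diff[OF lim tendsto_const]])
       (use ev in \<open>simp add: eventually_mono eq_commute\<close>)
  show ?thesis using tendsto_unique[OF _ l1 l2] by simp
qed

lemma norm_1_minus_iu: "cmod (1 - \<i> * complex_of_real u) = sqrt (1 + u\<^sup>2)"
  by (simp add: cmod_def)

lemma one_minus_iu_nz: "1 - \<i> * complex_of_real u \<noteq> 0"
  by (simp add: complex_eq_iff)

lemma exp_cis_eq: "cis (u * s) * complex_of_real (exp (- s)) = exp (complex_of_real s * (\<i> * complex_of_real u - 1))"
  by (simp add: cis_conv_exp exp_of_real[symmetric] exp_add[symmetric] algebra_simps)

lemma int_s_exp: "set_integrable lborel {0..} (\<lambda>s::real. s * exp (- s))"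
proof -
  have "integrable lborel (\<lambda>x. x^1 * exp (-x) * indicator {0 ..} x::real)"
    using has_bochner_integral_I0i_power_exp_m'[of 1] by (rule integrable.intros)
  then show ?thesis unfolding set_integrable_def by (simp add: mult_ac)
qed

lemma int_exp: "set_integrable lborel {0..} (\<lambda>s::real. exp (- s))"
  and int_exp_val: "(LBINT s:{0..}. exp (- s)) = (1::real)"
proof -
  have h: "has_bochner_integral lborel (\<lambda>x. x^0 * exp (-x) * indicator {0 ..} x::real) (fact 0)"
    by (rule has_bochner_integral_I0i_power_exp_m')
  then show "set_integrable lborel {0..} (\<lambda>s::real. exp (- s))"
    unfolding set_integrable_def by (auto intro: integrable.intros simp: mult_ac)
  show "(LBINT s:{0..}. exp (- s)) = (1::real)"
    using has_bochner_integral_integral_eq[OF h] unfolding set_lebesgue_integral_def by (simp add: mult_ac)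
qed

lemma kernel_val:
  "(LBINT s:{0..}. complex_of_real s * (cis (u * s) * complex_of_real (exp (- s)))) = 1 / (1 - \<i> * complex_of_real u)\<^sup>2"
proof -
  define c where "c = \<i> * complex_of_real u - 1"
  have c0: "c \<noteq> 0" unfolding c_def using one_minus_iu_nz[of u] by (simp add: complex_eq_iff)
  have cn: "norm c \<ge> 1" unfolding c_def using abs_Re_le_cmod[of "\<i> * complex_of_real u - 1"] by simp
  define F where "F = (\<lambda>z::complex. exp (z * c) * (z / c - 1 / c\<^sup>2))"
  have eq: "complex_of_real s * (cis (u * s) * complex_of_real (exp (- s))) = of_real s * exp (of_real s * c)" for s
    unfolding c_def exp_cis_eq ..
  have der: "((\<lambda>s. F (of_real s)) has_vector_derivative (of_real s * exp (of_real s * c))) (at s)" for s :: real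
  proof (rule has_vector_derivative_real_field)
    show "(F has_field_derivative of_real s * exp (of_real s * c)) (at (of_real s))"
      unfolding F_def
      by (auto intro!: derivative_eq_intros simp: field_simps power2_eq_square c0)
  qed
  have int: "set_integrable lborel {0..} (\<lambda>s. complex_of_real s * exp (of_real s * c))"
  proof (rule set_integrable_bound[OF int_s_exp])
    show "set_borel_measurable lborel {0..} (\<lambda>s. complex_of_real s * exp (complex_of_real s * c))"
      unfolding set_borel_measurable_def by measurable
    show "AE x in lborel. x \<in> {0..} \<longrightarrow> norm (complex_of_real x * exp (complex_of_real x * c)) \<le> norm (x * exp (- x))"
      by (auto simp: norm_mult c_def exp_cis_eq[symmetric])
  qed
  have lim: "((\<lambda>s. F (of_real s)) \<longlongrightarrow> 0) at_top"
  proof (rule Lim_null_comparison)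
    show "\<forall>\<^sub>F s in at_top. norm (F (of_real s)) \<le> exp (- s) * (s + 1)"
      using eventually_ge_at_top[of 1]
    proof eventually_elim
      case (elim s)
      have "norm (exp (of_real s * c)) = exp (- s)"
        by (simp add: c_def exp_cis_eq[symmetric] norm_mult)
      moreover have "norm (of_real s / c - 1 / c\<^sup>2) \<le> s + 1"
      proof -
        have "norm (of_real s / c - 1 / c\<^sup>2) \<le> norm (of_real s / c) + norm (1 / c\<^sup>2)"
          by (rule norm_triangle_ineq4)
        also have "norm (of_real s / c) \<le> s" using cn elim
          by (simp add: norm_divide divide_le_eq mult_le_cancel_left1)
        also have "norm (1 / c\<^sup>2) \<le> 1" using cn
          by (simp add: norm_divide norm_power divide_le_eq one_le_power)
        finally show ?thesis by simp
      qed
      ultimately show ?case unfolding F_def norm_mult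
        by (simp add: mult_left_mono)
    qed
    show "((\<lambda>s::real. exp (- s) * (s + 1)) \<longlongrightarrow> 0) at_top" by real_asymp
  qed
  have "(LBINT s:{0..}. complex_of_real s * exp (of_real s * c)) = 0 - F (of_real 0)"
    by (rule improper_FTC[OF int der lim])
  also have "\<dots> = 1 / c\<^sup>2" by (simp add: F_def)
  also have "\<dots> = 1 / (1 - \<i> * complex_of_real u)\<^sup>2" by (simp add: c_def power2_eq_square algebra_simps)
  finally show ?thesis unfolding eq .
qed

lemma inv_sq_int: "set_integrable lborel {0..} (\<lambda>u::real. 1 / (1 + u\<^sup>2))"
proof -
  have "set_integrable lborel {0<..} (\<lambda>u::real. 1 / (1 + u\<^sup>2))"
    using integrable_I0i_1_div_plus_square
    unfolding interval_lebesgue_integrable_def by (simp add: zero_ereal_def)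
  then show ?thesis using Ici_Ioi(1)[of "\<lambda>u::real. 1 / (1 + u\<^sup>2)"] by simp
qed

lemma norm_K: "norm (1 / (1 - \<i> * complex_of_real u)\<^sup>2) = 1 / (1 + u\<^sup>2)"
  by (simp add: norm_divide norm_power norm_1_minus_iu)

lemma KI: "(LBINT u:{0..}. 1 / (1 - \<i> * complex_of_real u)\<^sup>2) = \<i>"
proof -
  define G where "G = (\<lambda>z::complex. - \<i> / (1 - \<i> * z))"
  have der: "((\<lambda>u. G (of_real u)) has_vector_derivative (1 / (1 - \<i> * complex_of_real u)\<^sup>2)) (at u)" for u :: real
  proof (rule has_vector_derivative_real_field)
    have nz: "1 - \<i> * complex_of_real u \<noteq> 0" by (rule one_minus_iu_nz)
    show "(G has_field_derivative 1 / (1 - \<i> * complex_of_real u)\<^sup>2) (at (of_real u))"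
      unfolding G_def using nz
      by (auto intro!: derivative_eq_intros simp: field_simps power2_eq_square)
  qed
  have int: "set_integrable lborel {0..} (\<lambda>u. 1 / (1 - \<i> * complex_of_real u)\<^sup>2)"
  proof (rule set_integrable_bound[OF inv_sq_int])
    show "set_borel_measurable lborel {0..} (\<lambda>u. 1 / (1 - \<i> * complex_of_real u)\<^sup>2)"
      unfolding set_borel_measurable_def by measurable
    show "AE x in lborel. x \<in> {0..} \<longrightarrow> norm (1 / (1 - \<i> * complex_of_real x)\<^sup>2) \<le> norm (1 / (1 + x\<^sup>2))"
      by (auto simp: norm_K)
  qed
  have lim: "((\<lambda>u. G (of_real u)) \<longlongrightarrow> 0) at_top"
  proof (rule Lim_null_comparison)
    show "\<forall>\<^sub>F u in at_top. norm (G (of_real u)) \<le> 1 / u"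
      using eventually_gt_at_top[of 0]
    proof eventually_elim
      case (elim u)
      have "u \<le> norm (1 - \<i> * complex_of_real u)"
        using abs_Im_le_cmod[of "1 - \<i> * complex_of_real u"] by simp
      then show ?case using elim by (simp add: G_def norm_divide divide_le_eq field_simps)
    qed
    show "((\<lambda>u::real. 1 / u) \<longlongrightarrow> 0) at_top" by real_asymp
  qed
  have "(LBINT u:{0..}. 1 / (1 - \<i> * complex_of_real u)\<^sup>2) = 0 - G (of_real 0)"
    by (rule improper_FTC[OF int der lim])
  then show ?thesis by (simp add: G_def)
qed

lemma cis_meas[measurable]: "cis \<in> borel_measurable borel"
  by (rule borel_measurable_continuous_onI) (simp add: continuous_on_cis continuous_on_id)

lemma abel:
  fixes q :: "real \<Rightarrow> real" and L :: complex
  assumes cq: "continuous_on UNIV q" and int: "set_integrable lborel {0<..} q"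
    and lim0: "(q \<longlongrightarrow> 0) at_top"
    and L: "((\<lambda>t. - complex_of_real (q 0) - \<i> * complex_of_real t * (LBINT x:{0..}. cis (x * t) * complex_of_real (q x))) \<longlongrightarrow> L) at_top"
  shows "L = 0"
proof -
  have qm[measurable]: "q \<in> borel_measurable borel" using cq by (rule borel_measurable_continuous_onI)
  have int0: "set_integrable lborel {0..} q" using Ici_Ioi(1)[OF qm] int by simp
  define F where "F t = (LBINT x:{0..}. cis (x * t) * complex_of_real (q x))" for t
  define P where "P t = - complex_of_real (q 0) - \<i> * complex_of_real t * F t" for t
  define N where "N = (LBINT x:{0..}. \<bar>q x\<bar>)"
  define K where "K u = 1 / (1 - \<i> * complex_of_real u)\<^sup>2" for u :: real
  have Km[measurable]: "K \<in> borel_measurable borel" unfolding K_def by measurable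
  have Fint: "set_integrable lborel {0..} (\<lambda>x. cis (x * t) * complex_of_real (q x))" for t
  proof (rule set_integrable_bound[OF int0])
    show "set_borel_measurable lborel {0..} (\<lambda>x. cis (x * t) * complex_of_real (q x))"
      unfolding set_borel_measurable_def by measurable
  qed (auto simp: norm_mult)
  have FN: "norm (F t) \<le> N" for t
    using set_integral_norm_bound[OF Fint[of t]] by (simp add: F_def N_def norm_mult)
  have Fm[measurable]: "F \<in> borel_measurable borel"
    unfolding F_def set_lebesgue_integral_def by measurable
  have Pm[measurable]: "P \<in> borel_measurable borel" unfolding P_def by measurable
  have PL: "(P \<longlongrightarrow> L) at_top" using L unfolding P_def F_def .
  obtain Bq where Bq: "\<And>x. x \<ge> 0 \<Longrightarrow> \<bar>q x\<bar> \<le> Bq"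
  proof -
    have "\<forall>\<^sub>F x in at_top. dist (q x) 0 < 1" using lim0 by (simp add: tendsto_iff)
    then obtain R where R: "\<And>x. x \<ge> R \<Longrightarrow> \<bar>q x\<bar> < 1"
      unfolding eventually_at_top_linorder by auto
    have "bounded (q ` {0..R})"
      by (rule compact_imp_bounded[OF compact_continuous_image[OF continuous_on_subset[OF cq] compact_Icc]]) auto
    then obtain a where a: "\<And>x. x \<in> {0..R} \<Longrightarrow> \<bar>q x\<bar> \<le> a" unfolding bounded_real by (metis atLeastAtMost_iff image_eqI)
    have "\<bar>q x\<bar> \<le> max a 1" if "x \<ge> 0" for x
      using a[of x] R[of x] that by (cases "x \<le> R") auto
    then show ?thesis using that by blast
  qed
  obtain B where B: "\<And>t. t \<ge> 0 \<Longrightarrow> norm (P t) \<le> B"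
  proof -
    have "\<forall>\<^sub>F t in at_top. dist (P t) L < 1" using PL by (simp add: tendsto_iff)
    then obtain R where R: "\<And>t. t \<ge> R \<Longrightarrow> dist (P t) L < 1"
      unfolding eventually_at_top_linorder by auto
    have N0: "N \<ge> 0" using FN[of 0] norm_ge_zero order_trans by blast
    have "norm (P t) \<le> max (norm L + 1) (\<bar>q 0\<bar> + \<bar>R\<bar> * N)" if t: "t \<ge> 0" for t
    proof (cases "t \<ge> R")
      case True
      then have "norm (P t - L) < 1" using R[of t] by (simp add: dist_norm)
      then have "norm (P t) \<le> norm L + 1" using norm_triangle_ineq2[of "P t" L] by simp
      then show ?thesis by simp
    next
      case False
      have "norm (P t) \<le> norm (complex_of_real (q 0)) + norm (\<i> * complex_of_real t * F t)"
        unfolding P_def using norm_triangle_ineq4[of "- complex_of_real (q 0)"] by simp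
      also have "norm (\<i> * complex_of_real t * F t) = \<bar>t\<bar> * norm (F t)" by (simp add: norm_mult)
      also have "\<dots> \<le> \<bar>R\<bar> * N"
        using False t FN[of t] N0 by (intro mult_mono) auto
      finally show ?thesis by simp
    qed
    then show ?thesis using that by blast
  qed
  define A where "A n = (\<integral>s. indicator {0..} s *\<^sub>R (complex_of_real (exp (- s)) * P (real (Suc n) * s)) \<partial>lborel)" for n
  have A1: "A \<longlonglongrightarrow> L"
  proof -
    have "(\<lambda>n. A n) \<longlonglongrightarrow> (\<integral>s. indicator {0..} s *\<^sub>R (complex_of_real (exp (- s)) * L) \<partial>lborel)"
      unfolding A_def
    proof (rule integral_dominated_convergence[where w = "\<lambda>s. indicator {0..} s * (exp (- s) * B)"])
      show "integrable lborel (\<lambda>s. indicator {0..} s * (exp (- s) * B))"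
        using int_exp unfolding set_integrable_def by (simp add: mult.assoc[symmetric])
      show "AE s in lborel. (\<lambda>n. indicator {0..} s *\<^sub>R (complex_of_real (exp (- s)) * P (real (Suc n) * s)))
               \<longlonglongrightarrow> indicator {0..} s *\<^sub>R (complex_of_real (exp (- s)) * L)"
        using AE_lborel_singleton[of 0]
      proof eventually_elim
        case (elim s)
        show ?case
        proof (cases "s > 0")
          case True
          have "filterlim (\<lambda>n. s * real (Suc n)) at_top sequentially"
            by (rule filterlim_tendsto_pos_mult_at_top[OF tendsto_const True])
               (rule filterlim_compose[OF filterlim_real_sequentially filterlim_Suc])
          then have "filterlim (\<lambda>n. real (Suc n) * s) at_top sequentially" by (simp add: mult.commute)
          then have "(\<lambda>n. P (real (Suc n) * s)) \<longlonglongrightarrow> L" by (rule filterlim_compose[OF PL])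
          then show ?thesis by (intro tendsto_intros)
        next
          case False
          then show ?thesis using elim by simp
        qed
      qed
      show "AE s in lborel. norm (indicator {0..} s *\<^sub>R (complex_of_real (exp (- s)) * P (real (Suc n) * s)))
              \<le> indicator {0..} s * (exp (- s) * B)" for n
        by (auto simp: norm_mult split: split_indicator intro!: mult_left_mono B)
    qed auto
    also have "(\<integral>s. indicator {0..} s *\<^sub>R (complex_of_real (exp (- s)) * L) \<partial>lborel) = L"
    proof -
      have "(\<integral>s. indicator {0..} s *\<^sub>R (complex_of_real (exp (- s)) * L) \<partial>lborel)
          = (\<integral>s. complex_of_real (indicator {0..} s *\<^sub>R exp (- s)) * L \<partial>lborel)"
        by (intro Bochner_Integration.integral_cong) (auto split: split_indicator)
      also have "\<dots> = complex_of_real (\<integral>s. indicator {0..} s *\<^sub>R exp (- s) \<partial>lborel) * L"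
        by (simp only: integral_mult_left_zero integral_complex_of_real)
      also have "\<dots> = L" using int_exp_val unfolding set_lebesgue_integral_def by simp
      finally show ?thesis .
    qed
    finally show ?thesis .
  qed
  have A2: "A n = - complex_of_real (q 0) - \<i> * (LBINT u:{0..}. complex_of_real (q (u / real (Suc n))) * K u)" for n
  proof -
    define c where "c = real (Suc n)"
    have c: "c > 0" by (simp add: c_def)
    define H where "H s = (\<integral>u. indicator {0..} u *\<^sub>R (cis (u * s) * complex_of_real (q (u / c))) \<partial>lborel)" for s
    have Hm[measurable]: "H \<in> borel_measurable borel" unfolding H_def by measurable
    have qc_int: "integrable lborel (\<lambda>u. indicator {0..} u *\<^sub>R q (u / c))"
    proof -
      have "integrable lborel (\<lambda>u. indicator {0..} (0 + (1/c) * u) *\<^sub>R q (0 + (1/c) * u))"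
        by (rule lborel_integrable_real_affine[OF int0[unfolded set_integrable_def]]) (use c in simp)
      moreover have "(\<lambda>u. indicator {0..} (0 + (1/c) * u) *\<^sub>R q (0 + (1/c) * u)) = (\<lambda>u. indicator {0..} u *\<^sub>R q (u / c))"
        using c by (auto simp: indicator_def zero_le_divide_iff fun_eq_iff)
      ultimately show ?thesis by (metis (no_types, lifting))
    qed
    define Nc where "Nc = (\<integral>u. indicator {0..} u * \<bar>q (u / c)\<bar> \<partial>lborel)"
    have HN: "norm (H s) \<le> Nc" for s
    proof -
      have "norm (H s) \<le> (\<integral>u. norm (indicator {0..} u *\<^sub>R (cis (u * s) * complex_of_real (q (u / c)))) \<partial>lborel)"
        unfolding H_def by (rule integral_norm_bound)
      also have "\<dots> = Nc" unfolding Nc_def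
        by (intro Bochner_Integration.integral_cong) (auto simp: norm_mult split: split_indicator)
      finally show ?thesis .
    qed
    have FH: "F (c * s) = H s / complex_of_real c" for s
    proof -
      have "F (c * s) = (\<integral>x. indicator {0..} x *\<^sub>R (cis (x * (c * s)) * complex_of_real (q x)) \<partial>lborel)"
        unfolding F_def set_lebesgue_integral_def ..
      also have "\<dots> = \<bar>1/c\<bar> *\<^sub>R (\<integral>u. indicator {0..} (0 + (1/c) * u) *\<^sub>R (cis ((0 + (1/c) * u) * (c * s)) * complex_of_real (q (0 + (1/c) * u))) \<partial>lborel)"
        by (rule lborel_integral_real_affine) (use c in simp)
      also have "(\<integral>u. indicator {0..} (0 + (1/c) * u) *\<^sub>R (cis ((0 + (1/c) * u) * (c * s)) * complex_of_real (q (0 + (1/c) * u))) \<partial>lborel) = H s"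
        unfolding H_def using c
        by (intro Bochner_Integration.integral_cong) (auto simp: indicator_def zero_le_divide_iff)
      finally show ?thesis using c by (simp add: scaleR_conv_of_real divide_inverse mult.commute)
    qed
    have PH: "P (c * s) = - complex_of_real (q 0) - \<i> * complex_of_real s * H s" for s
      unfolding P_def FH using c by (simp add: field_simps)
    have Nc0: "Nc \<ge> 0" using HN[of 0] norm_ge_zero order_trans by blast
    have int2: "integrable lborel (\<lambda>s. indicator {0..} s *\<^sub>R (complex_of_real (s * exp (- s)) * H s))"
    proof (rule Bochner_Integration.integrable_bound)
      show "integrable lborel (\<lambda>s. Nc * (indicator {0..} s *\<^sub>R (s * exp (- s))))"
        using int_s_exp unfolding set_integrable_def by simp
      show "AE s in lborel. norm (indicator {0..} s *\<^sub>R (complex_of_real (s * exp (- s)) * H s))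
             \<le> norm (Nc * (indicator {0..} s *\<^sub>R (s * exp (- s))))"
      proof (rule AE_I2)
        fix s :: real
        show "norm (indicator {0..} s *\<^sub>R (complex_of_real (s * exp (- s)) * H s))
             \<le> norm (Nc * (indicator {0..} s *\<^sub>R (s * exp (- s))))"
        proof (cases "s \<ge> 0")
          case True
          have "s * exp (- s) * norm (H s) \<le> s * exp (- s) * Nc"
            by (rule mult_left_mono[OF HN]) (use True in simp)
          then show ?thesis using True Nc0 by (simp add: norm_mult abs_mult mult.commute)
        qed simp
      qed
    qed measurable
    have int1: "integrable lborel (\<lambda>s. indicator {0..} s *\<^sub>R (complex_of_real (exp (- s)) * - complex_of_real (q 0)))"
    proof -
      have "integrable lborel (\<lambda>s. complex_of_real (indicator {0..} s *\<^sub>R exp (- s)) * - complex_of_real (q 0))"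
      proof (rule integrable_mult_left)
        show "integrable lborel (\<lambda>s. complex_of_real (indicator {0..} s *\<^sub>R exp (- s)))"
          using int_exp unfolding set_integrable_def by (intro integrable_of_real)
      qed
      moreover have "(\<lambda>s. complex_of_real (indicator {0..} s *\<^sub>R exp (- s)) * - complex_of_real (q 0))
          = (\<lambda>s. indicator {0..} s *\<^sub>R (complex_of_real (exp (- s)) * - complex_of_real (q 0)))"
        by (auto simp: fun_eq_iff split: split_indicator)
      ultimately show ?thesis by (metis (no_types, lifting))
    qed
    have "A n = (\<integral>s. indicator {0..} s *\<^sub>R (complex_of_real (exp (- s)) * - complex_of_real (q 0))
                 + (- \<i>) * (indicator {0..} s *\<^sub>R (complex_of_real (s * exp (- s)) * H s)) \<partial>lborel)"
      unfolding A_def c_def[symmetric]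
      by (intro Bochner_Integration.integral_cong refl) (simp add: PH split: split_indicator, simp add: algebra_simps)
    also have "\<dots> = (\<integral>s. indicator {0..} s *\<^sub>R (complex_of_real (exp (- s)) * - complex_of_real (q 0)) \<partial>lborel)
                 + (- \<i>) * (\<integral>s. indicator {0..} s *\<^sub>R (complex_of_real (s * exp (- s)) * H s) \<partial>lborel)"
      by (simp only: Bochner_Integration.integral_add[OF int1 integrable_mult_right[OF int2]] integral_mult_right_zero)
    also have "(\<integral>s. indicator {0..} s *\<^sub>R (complex_of_real (exp (- s)) * - complex_of_real (q 0)) \<partial>lborel)
               = - complex_of_real (q 0)"
    proof -
      have "(\<integral>s. indicator {0..} s *\<^sub>R (complex_of_real (exp (- s)) * - complex_of_real (q 0)) \<partial>lborel)
          = (\<integral>s. complex_of_real (indicator {0..} s *\<^sub>R exp (- s)) * - complex_of_real (q 0) \<partial>lborel)"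
        by (intro Bochner_Integration.integral_cong) (auto split: split_indicator)
      also have "\<dots> = complex_of_real (\<integral>s. indicator {0..} s *\<^sub>R exp (- s) \<partial>lborel) * - complex_of_real (q 0)"
        by (simp only: integral_mult_left_zero integral_complex_of_real)
      also have "\<dots> = - complex_of_real (q 0)" using int_exp_val unfolding set_lebesgue_integral_def by simp
      finally show ?thesis .
    qed
    also have "(\<integral>s. indicator {0..} s *\<^sub>R (complex_of_real (s * exp (- s)) * H s) \<partial>lborel)
             = (LBINT u:{0..}. complex_of_real (q (u / c)) * K u)"
    proof -
      define G where "G s u = indicator {0..} s *\<^sub>R (indicator {0..} u *\<^sub>R (complex_of_real (q (u / c)) *
                   (complex_of_real s * (cis (u * s) * complex_of_real (exp (- s))))))" for s u :: real
      have Gm[measurable]: "case_prod G \<in> borel_measurable (lborel \<Otimes>\<^sub>M lborel)"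
        unfolding G_def by measurable
      have step1: "indicator {0..} s *\<^sub>R (complex_of_real (s * exp (- s)) * H s) = (\<integral>u. G s u \<partial>lborel)" for s
      proof -
        have "(\<integral>u. G s u \<partial>lborel) = (\<integral>u. (indicator {0..} s *\<^sub>R complex_of_real (s * exp (- s))) *
                 (indicator {0..} u *\<^sub>R (cis (u * s) * complex_of_real (q (u / c)))) \<partial>lborel)"
          unfolding G_def by (intro Bochner_Integration.integral_cong) (auto split: split_indicator)
        also have "\<dots> = (indicator {0..} s *\<^sub>R complex_of_real (s * exp (- s))) * H s"
          unfolding H_def by (rule integral_mult_right_zero)
        finally show ?thesis by (simp split: split_indicator)
      qed
      have GN: "(\<integral>u. norm (G s u) \<partial>lborel) = (indicator {0..} s * (s * exp (- s))) * Nc" for s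
      proof -
        have "(\<integral>u. norm (G s u) \<partial>lborel) = (\<integral>u. (indicator {0..} s * (s * exp (- s))) * (indicator {0..} u * \<bar>q (u / c)\<bar>) \<partial>lborel)"
          unfolding G_def by (intro Bochner_Integration.integral_cong) (auto simp: norm_mult split: split_indicator)
        also have "\<dots> = (indicator {0..} s * (s * exp (- s))) * Nc"
          unfolding Nc_def by (rule integral_mult_right_zero)
        finally show ?thesis .
      qed
      have Gint: "integrable (lborel \<Otimes>\<^sub>M lborel) (case_prod G)"
      proof (rule lborel_pair.Fubini_integrable)
        show "integrable lborel (\<lambda>s. \<integral>u. norm (case_prod G (s, u)) \<partial>lborel)"
          unfolding case_prod_conv GN using int_s_exp unfolding set_integrable_def
          by (intro integrable_mult_left) (simp add: mult_ac)
        show "AE s in lborel. integrable lborel (\<lambda>u. case_prod G (s, u))"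
        proof (rule AE_I2)
          fix s :: real
          show "integrable lborel (\<lambda>u. case_prod G (s, u))"
          proof (rule Bochner_Integration.integrable_bound)
            show "integrable lborel (\<lambda>u. (indicator {0..} s * (s * exp (- s))) *\<^sub>R (indicator {0..} u *\<^sub>R q (u / c)))"
              using qc_int by (rule integrable_scaleR_right)
            show "AE u in lborel. norm (case_prod G (s, u)) \<le> norm ((indicator {0..} s * (s * exp (- s))) *\<^sub>R (indicator {0..} u *\<^sub>R q (u / c)))"
              unfolding G_def by (intro AE_I2) (auto simp: norm_mult abs_mult split: split_indicator)
          qed (simp only: case_prod_conv G_def, measurable)
        qed
      qed (rule Gm)
      have "(\<integral>s. indicator {0..} s *\<^sub>R (complex_of_real (s * exp (- s)) * H s) \<partial>lborel)
          = (\<integral>s. (\<integral>u. G s u \<partial>lborel) \<partial>lborel)"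
        unfolding step1 ..
      also have "\<dots> = (\<integral>u. (\<integral>s. G s u \<partial>lborel) \<partial>lborel)"
        by (rule lborel_pair.Fubini_integral[symmetric, OF Gint])
      also have "\<dots> = (\<integral>u. indicator {0..} u *\<^sub>R (complex_of_real (q (u / c)) * K u) \<partial>lborel)"
      proof (intro Bochner_Integration.integral_cong refl)
        fix u :: real
        have "(\<integral>s. G s u \<partial>lborel) = (\<integral>s. (indicator {0..} u *\<^sub>R complex_of_real (q (u / c))) *
               (indicator {0..} s *\<^sub>R (complex_of_real s * (cis (u * s) * complex_of_real (exp (- s))))) \<partial>lborel)"
          unfolding G_def by (intro Bochner_Integration.integral_cong) (auto split: split_indicator)
        also have "\<dots> = (indicator {0..} u *\<^sub>R complex_of_real (q (u / c))) * K u"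
          using kernel_val[of u] unfolding set_lebesgue_integral_def K_def
          by (simp only: integral_mult_right_zero)
        finally show "(\<integral>s. G s u \<partial>lborel) = indicator {0..} u *\<^sub>R (complex_of_real (q (u / c)) * K u)"
          by (simp split: split_indicator)
      qed
      finally show ?thesis unfolding set_lebesgue_integral_def .
    qed
    finally show ?thesis by (simp add: c_def)
  qed
  have A3: "(\<lambda>n. LBINT u:{0..}. complex_of_real (q (u / real (Suc n))) * K u) \<longlonglongrightarrow> complex_of_real (q 0) * \<i>"
  proof -
    have Bq0: "Bq \<ge> 0" using Bq[of 0] by simp
    have "(\<lambda>n. LBINT u:{0..}. complex_of_real (q (u / real (Suc n))) * K u)
          \<longlonglongrightarrow> (\<integral>u. indicator {0..} u *\<^sub>R (complex_of_real (q 0) * K u) \<partial>lborel)"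
      unfolding set_lebesgue_integral_def
    proof (rule integral_dominated_convergence[where w = "\<lambda>u. Bq * (indicator {0..} u * (1 / (1 + u\<^sup>2)))"])
      show "integrable lborel (\<lambda>u. Bq * (indicator {0..} u * (1 / (1 + u\<^sup>2))))"
        using integrable_mult_right[of Bq, OF inv_sq_int[unfolded set_integrable_def]] by simp
      show "AE u in lborel. (\<lambda>n. indicator {0..} u *\<^sub>R (complex_of_real (q (u / real (Suc n))) * K u))
               \<longlonglongrightarrow> indicator {0..} u *\<^sub>R (complex_of_real (q 0) * K u)"
      proof (rule AE_I2)
        fix u :: real
        have "(\<lambda>n. u / real (Suc n)) \<longlonglongrightarrow> 0"
          by (rule tendsto_divide_0[OF tendsto_const])
             (rule filterlim_at_top_imp_at_infinity, rule filterlim_compose[OF filterlim_real_sequentially filterlim_Suc])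
        moreover have "isCont q 0" using cq by (simp add: continuous_on_eq_continuous_at)
        ultimately have "(\<lambda>n. q (u / real (Suc n))) \<longlonglongrightarrow> q 0"
          using isCont_tendsto_compose by blast
        then show "(\<lambda>n. indicator {0..} u *\<^sub>R (complex_of_real (q (u / real (Suc n))) * K u))
               \<longlonglongrightarrow> indicator {0..} u *\<^sub>R (complex_of_real (q 0) * K u)"
          by (intro tendsto_intros)
      qed
      show "AE u in lborel. norm (indicator {0..} u *\<^sub>R (complex_of_real (q (u / real (Suc n))) * K u))
              \<le> Bq * (indicator {0..} u * (1 / (1 + u\<^sup>2)))" for n
      proof (rule AE_I2)
        fix u :: real
        show "norm (indicator {0..} u *\<^sub>R (complex_of_real (q (u / real (Suc n))) * K u))
              \<le> Bq * (indicator {0..} u * (1 / (1 + u\<^sup>2)))"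
        proof (cases "u \<ge> 0")
          case True
          have "\<bar>q (u / real (Suc n))\<bar> \<le> Bq" using True by (intro Bq) simp
          moreover have "norm (complex_of_real (q (u / real (Suc n))) * K u) = \<bar>q (u / real (Suc n))\<bar> * (1 / (1 + u\<^sup>2))"
            unfolding norm_mult K_def norm_K by simp
          ultimately show ?thesis using True
            by (simp add: divide_right_mono add_pos_nonneg)
        qed simp
      qed
    qed auto
    also have "(\<integral>u. indicator {0..} u *\<^sub>R (complex_of_real (q 0) * K u) \<partial>lborel) = complex_of_real (q 0) * \<i>"
    proof -
      have "(\<integral>u. indicator {0..} u *\<^sub>R (complex_of_real (q 0) * K u) \<partial>lborel)
           = (\<integral>u. complex_of_real (q 0) * (indicator {0..} u *\<^sub>R K u) \<partial>lborel)"
        by (intro Bochner_Integration.integral_cong) (auto split: split_indicator)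
      also have "\<dots> = complex_of_real (q 0) * (\<integral>u. indicator {0..} u *\<^sub>R K u \<partial>lborel)"
        by (rule integral_mult_right_zero)
      finally show ?thesis using KI unfolding set_lebesgue_integral_def K_def by simp
    qed
    finally show ?thesis .
  qed
  have "A \<longlonglongrightarrow> - complex_of_real (q 0) - \<i> * (complex_of_real (q 0) * \<i>)"
    unfolding A2 by (intro tendsto_intros A3)
  moreover have "- complex_of_real (q 0) - \<i> * (complex_of_real (q 0) * \<i>) = 0"
    by (simp add: mult.left_commute[of \<i>])
  ultimately have "A \<longlonglongrightarrow> 0" by simp
  then show "L = 0" using A1 LIMSEQ_unique by blast
qed

lemma RS_cong_imp:
  assumes eq: "\<And>x. x \<ge> a \<Longrightarrow> g1 x = g2 x" and H: "has_RS_integral f g1 a b I"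
  shows "has_RS_integral f g2 a b I"
  unfolding has_RS_integral_def
proof (intro allI impI)
  fix e :: real assume e: "e > 0"
  then obtain d where d: "d > 0" and D: "\<And>n x t. x 0 = a \<and> x n = b \<and>
        (\<forall>i<n. x i < x (Suc i) \<and> x (Suc i) - x i < d \<and> x i \<le> t i \<and> t i \<le> x (Suc i))
        \<Longrightarrow> norm ((\<Sum>i<n. f (t i) * complex_of_real (g1 (x (Suc i)) - g1 (x i))) - I) < e"
    using H unfolding has_RS_integral_def by meson
  show "\<exists>d>0. \<forall>n x t. x 0 = a \<and> x n = b \<and>
        (\<forall>i<n. x i < x (Suc i) \<and> x (Suc i) - x i < d \<and> x i \<le> t i \<and> t i \<le> x (Suc i))
        \<longrightarrow> norm ((\<Sum>i<n. f (t i) * complex_of_real (g2 (x (Suc i)) - g2 (x i))) - I) < e"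
  proof (intro exI[of _ d] conjI allI impI d)
    fix n x t assume P: "x 0 = a \<and> x n = b \<and>
        (\<forall>i<n. x i < x (Suc i) \<and> x (Suc i) - x i < d \<and> x i \<le> t i \<and> t i \<le> x (Suc i))"
    have inc: "\<forall>i<n. x i < x (Suc i)" using P by auto
    have ge: "x i \<ge> a" if "i \<le> n" for i using chain_mono[OF inc, of 0 i] that P by auto
    have "(\<Sum>i<n. f (t i) * complex_of_real (g1 (x (Suc i)) - g1 (x i)))
        = (\<Sum>i<n. f (t i) * complex_of_real (g2 (x (Suc i)) - g2 (x i)))"
      by (intro sum.cong refl) (simp add: eq ge)
    then show "norm ((\<Sum>i<n. f (t i) * complex_of_real (g2 (x (Suc i)) - g2 (x i))) - I) < e"
      using D[OF P] by simp
  qed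
qed

lemma Phi_cong:
  assumes eq: "\<And>x. x \<ge> 0 \<Longrightarrow> g1 x = g2 x"
  shows "Phi g1 t = Phi g2 t"
proof -
  have "has_RS_integral f g1 0 R = has_RS_integral f g2 0 R" for f R
    using RS_cong_imp[of 0 g1 g2] RS_cong_imp[of 0 g2 g1] eq by (auto simp: fun_eq_iff)
  then show ?thesis unfolding Phi_def RS_integral_0_inf_def RS_integral_def by simp
qed

theorem corollary1:
  fixes \<phi> :: "real \<Rightarrow> real"
  assumes cont: "continuous_on {0..} \<phi>"
    and integrable: "set_integrable lborel {0<..} \<phi>"
    and bv: "bounded_variation_on \<phi> {0..}"
    and lim0: "(\<phi> \<longlongrightarrow> 0) at_top"
  shows "((Phi \<phi> \<longlongrightarrow> 0) at_infinity \<longleftrightarrow>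
           (\<exists>L1. ((\<lambda>t. t * (LBINT x:{0<..}. \<phi> x * sin (x * t))) \<longlongrightarrow> L1) at_top) \<and>
           (\<exists>L2. ((\<lambda>t. t * (LBINT x:{0<..}. \<phi> x * cos (x * t))) \<longlongrightarrow> L2) at_top))
       \<and> ((Phi \<phi> \<longlongrightarrow> 0) at_infinity \<longrightarrow>
           ((\<lambda>t. t * (LBINT x:{0<..}. \<phi> x * sin (x * t))) \<longlongrightarrow> \<phi> 0) at_top \<and>
           ((\<lambda>t. t * (LBINT x:{0<..}. \<phi> x * cos (x * t))) \<longlongrightarrow> 0) at_top)"
proof -
  define q where "q x = \<phi> (max 0 x)" for x
  have qeq: "q x = \<phi> x" if "x \<ge> 0" for x using that by (simp add: q_def)
  have cq: "continuous_on UNIV q"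
    unfolding q_def by (rule continuous_on_compose2[OF cont]) (auto intro!: continuous_intros)
  have qm[measurable]: "q \<in> borel_measurable borel" using cq by (rule borel_measurable_continuous_onI)
  have intq: "set_integrable lborel {0<..} q"
    using integrable by (subst set_integrable_cong[OF refl refl]) (auto simp: qeq)
  have limq: "(q \<longlongrightarrow> 0) at_top"
  proof (rule Lim_transform_eventually[OF lim0])
    show "\<forall>\<^sub>F x in at_top. \<phi> x = q x"
      using eventually_ge_at_top[of "0::real"] by eventually_elim (simp add: qeq)
  qed
  define S where "S t = (LBINT x:{0<..}. \<phi> x * sin (x * t))" for t
  define C where "C t = (LBINT x:{0<..}. \<phi> x * cos (x * t))" for t
  have PhiEq: "Phi \<phi> t = complex_of_real (t * S t - \<phi> 0) - \<i> * complex_of_real (t * C t)" for t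
  proof -
    have bnd: "\<bar>q x * f\<bar> \<le> \<bar>q x\<bar>" if "\<bar>f\<bar> \<le> 1" for x f
      using that by (simp add: abs_mult mult_left_le)
    have intc: "set_integrable lborel {0<..} (\<lambda>x. q x * cos (x * t))"
      by (rule set_integrable_bound[OF intq]) (auto simp: set_borel_measurable_def intro!: bnd)
    have ints: "set_integrable lborel {0<..} (\<lambda>x. q x * sin (x * t))"
      by (rule set_integrable_bound[OF intq]) (auto simp: set_borel_measurable_def intro!: bnd)
    have intc': "set_integrable lborel {0<..} (\<lambda>x. complex_of_real (q x * cos (x * t)))"
      using integrable_of_real[OF intc[unfolded set_integrable_def], where 'a=complex]
      unfolding set_integrable_def by (simp add: scaleR_conv_of_real)
    have ints': "set_integrable lborel {0<..} (\<lambda>x. \<i> * complex_of_real (q x * sin (x * t)))"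
    proof -
      have "set_integrable lborel {0<..} (\<lambda>x. complex_of_real (q x * sin (x * t)))"
        using integrable_of_real[OF ints[unfolded set_integrable_def], where 'a=complex]
        unfolding set_integrable_def by (simp add: scaleR_conv_of_real)
      then show ?thesis by (rule set_integrable_mult_right[of \<i>, OF _]) 
    qed
    have Cq: "(LBINT x:{0<..}. q x * cos (x * t)) = C t"
      unfolding C_def by (rule set_lebesgue_integral_cong) (auto simp: qeq)
    have Sq: "(LBINT x:{0<..}. q x * sin (x * t)) = S t"
      unfolding S_def by (rule set_lebesgue_integral_cong) (auto simp: qeq)
    have "(LBINT x:{0<..}. cis (x * t) * complex_of_real (q x))
        = (LBINT x:{0<..}. complex_of_real (q x * cos (x * t)) + \<i> * complex_of_real (q x * sin (x * t)))"
      by (rule set_lebesgue_integral_cong) (auto simp: complex_eq_iff)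
    also have "\<dots> = (LBINT x:{0<..}. complex_of_real (q x * cos (x * t))) + (LBINT x:{0<..}. \<i> * complex_of_real (q x * sin (x * t)))"
      by (rule set_integral_add(2)[OF intc' ints'])
    also have "\<dots> = complex_of_real (C t) + \<i> * complex_of_real (S t)"
      by (simp only: set_integral_mult_right set_integral_complex_of_real Cq Sq)
    finally have Fq: "(LBINT x:{0<..}. cis (x * t) * complex_of_real (q x)) = complex_of_real (C t) + \<i> * complex_of_real (S t)" .
    have "Phi \<phi> t = Phi q t" using Phi_cong[of \<phi> q t] qeq by simp
    also have "\<dots> = - complex_of_real (q 0) - \<i> * complex_of_real t * (complex_of_real (C t) + \<i> * complex_of_real (S t))"
      using Phi_formula[OF cq intq limq, of t] Fq by simp
    also have "\<dots> = complex_of_real (t * S t - \<phi> 0) - \<i> * complex_of_real (t * C t)"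
      by (simp add: complex_eq_iff qeq)
    finally show ?thesis .
  qed
  have Sneg: "S (- t) = - S t" for t
    unfolding S_def set_lebesgue_integral_def by simp
  have Cneg: "C (- t) = C t" for t
    unfolding C_def by simp
  have PhiEq': "Phi \<phi> (- t) = complex_of_real (t * S t - \<phi> 0) + \<i> * complex_of_real (t * C t)" for t
    using PhiEq[of "- t"] by (simp add: Sneg Cneg)
  have abel': "L = 0" if "(Phi \<phi> \<longlongrightarrow> L) at_top" for L
  proof (rule abel[OF cq intq limq])
    have "Phi \<phi> t = - complex_of_real (q 0) - \<i> * complex_of_real t * (LBINT x:{0..}. cis (x * t) * complex_of_real (q x))" for t
    proof -
      have m: "(\<lambda>x. cis (x * t) * complex_of_real (q x)) \<in> borel_measurable borel" by measurable
      show ?thesis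
        using Phi_cong[of \<phi> q t] Phi_formula[OF cq intq limq, of t] Ici_Ioi(2)[OF m] qeq by simp
    qed
    then have "Phi \<phi> = (\<lambda>t. - complex_of_real (q 0) - \<i> * complex_of_real t * (LBINT x:{0..}. cis (x * t) * complex_of_real (q x)))"
      by (intro ext)
    then show "((\<lambda>t. - complex_of_real (q 0) - \<i> * complex_of_real t * (LBINT x:{0..}. cis (x * t) * complex_of_real (q x))) \<longlongrightarrow> L) at_top"
      using that by simp
  qed
  have fwd: "((\<lambda>t. t * S t) \<longlongrightarrow> \<phi> 0) at_top \<and> ((\<lambda>t. t * C t) \<longlongrightarrow> 0) at_top"
    if H: "(Phi \<phi> \<longlongrightarrow> 0) at_infinity"
  proof -
    have H': "(Phi \<phi> \<longlongrightarrow> 0) at_top" using tendsto_mono[OF at_top_le_at_infinity H] .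
    have "((\<lambda>t. Re (Phi \<phi> t) + \<phi> 0) \<longlongrightarrow> Re 0 + \<phi> 0) at_top"
      by (intro tendsto_intros H')
    moreover have "((\<lambda>t. - Im (Phi \<phi> t)) \<longlongrightarrow> - Im 0) at_top"
      by (intro tendsto_intros H')
    ultimately show ?thesis by (simp add: PhiEq)
  qed
  have bwd: "(Phi \<phi> \<longlongrightarrow> 0) at_infinity"
    if L1: "((\<lambda>t. t * S t) \<longlongrightarrow> L1) at_top" and L2: "((\<lambda>t. t * C t) \<longlongrightarrow> L2) at_top" for L1 L2
  proof -
    have T: "(Phi \<phi> \<longlongrightarrow> complex_of_real (L1 - \<phi> 0) - \<i> * complex_of_real L2) at_top"
      unfolding PhiEq by (intro tendsto_intros L1 L2)
    have Z: "complex_of_real (L1 - \<phi> 0) - \<i> * complex_of_real L2 = 0" by (rule abel'[OF T])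
    then have "L1 = \<phi> 0" "L2 = 0" by (simp_all add: complex_eq_iff)
    have top: "(Phi \<phi> \<longlongrightarrow> 0) at_top" using T Z by simp
    have "((\<lambda>t. complex_of_real ((- t) * S (- t) - \<phi> 0) + \<i> * complex_of_real ((- t) * C (- t))) \<longlongrightarrow>
            complex_of_real (L1 - \<phi> 0) + \<i> * complex_of_real L2) at_bot"
      by (intro tendsto_intros filterlim_compose[OF L1 filterlim_uminus_at_top_at_bot]
                filterlim_compose[OF L2 filterlim_uminus_at_top_at_bot])
    moreover have "complex_of_real (L1 - \<phi> 0) + \<i> * complex_of_real L2 = 0"
      using \<open>L1 = \<phi> 0\<close> \<open>L2 = 0\<close> by simp
    moreover have "Phi \<phi> = (\<lambda>t. complex_of_real ((- t) * S (- t) - \<phi> 0) + \<i> * complex_of_real ((- t) * C (- t)))"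
      using PhiEq' by (intro ext) (metis minus_minus)
    ultimately have bot: "(Phi \<phi> \<longlongrightarrow> 0) at_bot" by metis
    show ?thesis unfolding at_infinity_eq_at_top_bot by (rule filterlim_sup[OF top bot])
  qed
  show ?thesis
    unfolding S_def[symmetric] C_def[symmetric]
    using fwd bwd by blast
qed

end
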